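(* Assume the setup in the context, with the fine-tuning regime and local smoothness with radius $r\ge 2\sqrt{C}$, and let $0<\epsilon\le 1$ be such that $|\langle\tau_i,\tau_j\rangle|\le\epsilon\|\tau_i\|\|\tau_j\|$ for all $i\neq j$. Let $\mathbf{W}_e\in\mathbb{R}^{T\times M}$ have every column in the probability simplex $\Delta^{T-1}$, define basis vectors $B_m=\sum_{j=1}^T\mathbf{W}_e[j,m]\tau_j$ for $m\in[M]$, let $\alpha\in\Delta^{M-1}$, and set $\theta^M_{\mathrm{Add}}=\theta_0+\sum_{m=1}^M\alpha_mB_m$. Then for every $i\in[T]$, $$\mathcal{L}_i(\theta^M_{\mathrm{Add}})-\mathcal{L}_i(\theta_i)\le L_iC(1+\epsilon).$$
   Context: Setup: $\theta_0\in\mathbb{R}^d$ is a pretrained parameter vector; $\theta_1,\dots,\theta_T\in\mathbb{R}^d$ are fine-tuned parameters and $\tau_i:=\theta_i-\theta_0$ are task vectors. For each task $i$, $\mathcal{L}_i:\mathbb{R}^d\to\mathbb{R}$ is a differentiable loss (population risk). Norms are Euclidean. Fine-tuning regime: $\nabla\mathcal{L}_i(\theta_i)=0$ for all $i\in[T]$, and there is $C>0$ with $\|\tau_i\|^2\le C$ for all $i$. Local smoothness with radius $r>0$: for each $i$ there is $L_i\ge 0$ such that for all $\theta$ with $\|\theta-\theta_i\|\le r$, $\big|\mathcal{L}_i(\theta)-\mathcal{L}_i(\theta_i)-\langle\theta-\theta_i,\nabla\mathcal{L}_i(\theta_i)\rangle\big|\le\frac{L_i}{2}\|\theta-\theta_i\|^2$.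 $\Delta^{K-1}=\{x\in\mathbb{R}^K: x\ge 0,\ \sum_k x_k=1\}$. *)

theory Defs
  imports "HOL-Analysis.Analysis"
begin

definition task_vec :: "'a::real_vector \<Rightarrow> (nat \<Rightarrow> 'a) \<Rightarrow> nat \<Rightarrow> 'a" where
  "task_vec theta0 theta i = theta i - theta0"

definition basis_vec :: "'a::real_vector \<Rightarrow> (nat \<Rightarrow> 'a) \<Rightarrow> nat \<Rightarrow> (nat \<Rightarrow> nat \<Rightarrow> real) \<Rightarrow> nat \<Rightarrow> 'a" where
  "basis_vec theta0 theta T W m = (\<Sum>j=1..T. W j m *\<^sub>R task_vec theta0 theta j)"

definition theta_add :: "'a::real_vector \<Rightarrow> (nat \<Rightarrow> 'a) \<Rightarrow> nat \<Rightarrow> nat \<Rightarrow> (nat \<Rightarrow> nat \<Rightarrow> real) \<Rightarrow> (nat \<Rightarrow> real) \<Rightarrow> 'a" where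
  "theta_add theta0 theta T M W \<alpha> = theta0 + (\<Sum>m=1..M. \<alpha> m *\<^sub>R basis_vec theta0 theta T W m)"

end

theory Submission
  imports Defs
begin

theorem mainTheorem5:
  fixes theta0 :: "'a::euclidean_space"
    and theta :: "nat \<Rightarrow> 'a"
    and Loss :: "nat \<Rightarrow> 'a \<Rightarrow> real"
    and grad :: "nat \<Rightarrow> 'a \<Rightarrow> 'a"
    and Lsm :: "nat \<Rightarrow> real"
    and T M :: nat
    and C r \<epsilon> :: real
    and W :: "nat \<Rightarrow> nat \<Rightarrow> real"
    and \<alpha> :: "nat \<Rightarrow> real"
  assumes diff: "\<And>i x. i \<in> {1..T} \<Longrightarrow> (Loss i has_derivative (\<lambda>h. grad i x \<bullet> h)) (at x)"
    and stationary: "\<And>i. i \<in> {1..T} \<Longrightarrow> grad i (theta i) = 0"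
    and Cpos: "C > 0"
    and taubound: "\<And>i. i \<in> {1..T} \<Longrightarrow> (norm (task_vec theta0 theta i))\<^sup>2 \<le> C"
    and rpos: "r > 0"
    and rbound: "r \<ge> 2 * sqrt C"
    and Lsm_nonneg: "\<And>i. i \<in> {1..T} \<Longrightarrow> Lsm i \<ge> 0"
    and smooth: "\<And>i x. i \<in> {1..T} \<Longrightarrow> norm (x - theta i) \<le> r \<Longrightarrow>
        \<bar>Loss i x - Loss i (theta i) - (x - theta i) \<bullet> grad i (theta i)\<bar>
          \<le> Lsm i / 2 * (norm (x - theta i))\<^sup>2"
    and eps_pos: "0 < \<epsilon>" and eps_le: "\<epsilon> \<le> 1"
    and incoh: "\<And>i j. i \<in> {1..T} \<Longrightarrow> j \<in> {1..T} \<Longrightarrow> i \<noteq> j \<Longrightarrow>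
        \<bar>task_vec theta0 theta i \<bullet> task_vec theta0 theta j\<bar> \<le> \<epsilon> * norm (task_vec theta0 theta i) * norm (task_vec theta0 theta j)"
    and W_nonneg: "\<And>j m. j \<in> {1..T} \<Longrightarrow> m \<in> {1..M} \<Longrightarrow> W j m \<ge> 0"
    and W_sum: "\<And>m. m \<in> {1..M} \<Longrightarrow> (\<Sum>j=1..T. W j m) = 1"
    and alpha_nonneg: "\<And>m. m \<in> {1..M} \<Longrightarrow> \<alpha> m \<ge> 0"
    and alpha_sum: "(\<Sum>m=1..M. \<alpha> m) = 1"
    and i_in: "i \<in> {1..T}"
  shows "Loss i (theta_add theta0 theta T M W \<alpha>) - Loss i (theta i) \<le> Lsm i * C * (1 + \<epsilon>)"
proof -
  define \<tau> where "\<tau> = task_vec theta0 theta"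
  define c where "c j = (\<Sum>m=1..M. \<alpha> m * W j m)" for j
  define v where "v = (\<Sum>j=1..T. c j *\<^sub>R \<tau> j)"
  have c_nonneg: "c j \<ge> 0" if "j \<in> {1..T}" for j
    unfolding c_def using that W_nonneg alpha_nonneg by (auto intro!: sum_nonneg)
  have c_sum: "(\<Sum>j=1..T. c j) = 1"
  proof -
    have "(\<Sum>j=1..T. c j) = (\<Sum>m=1..M. \<alpha> m * (\<Sum>j=1..T. W j m))"
      unfolding c_def sum_distrib_left by (rule sum.swap)
    also have "\<dots> = (\<Sum>m=1..M. \<alpha> m)" using W_sum by simp
    finally show ?thesis using alpha_sum by simp
  qed
  have v_eq: "(\<Sum>m=1..M. \<alpha> m *\<^sub>R basis_vec theta0 theta T W m) = v"
    unfolding v_def c_def basis_vec_def \<tau>_def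
    by (simp add: scaleR_sum_right scaleR_sum_left) (rule sum.swap)
  have ta: "theta_add theta0 theta T M W \<alpha> - theta i = v - \<tau> i"
    unfolding theta_add_def v_eq \<tau>_def task_vec_def by simp
  have nt: "norm (\<tau> j) \<le> sqrt C" if "j \<in> {1..T}" for j
    using taubound[OF that] unfolding \<tau>_def by (simp add: real_le_rsqrt)
  have nv: "norm v \<le> sqrt C"
  proof -
    have "norm v \<le> (\<Sum>j=1..T. norm (c j *\<^sub>R \<tau> j))" unfolding v_def by (rule norm_sum)
    also have "\<dots> \<le> (\<Sum>j=1..T. c j * sqrt C)"
      by (rule sum_mono) (simp add: c_nonneg mult_left_mono nt)
    also have "\<dots> = sqrt C" using c_sum by (simp add: sum_distrib_right[symmetric])
    finally show ?thesis .
  qed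
  have sC: "sqrt C * sqrt C = C" using Cpos by simp
  have nvsq: "(norm v)\<^sup>2 \<le> C"
    using power_mono[OF nv norm_ge_zero, of 2] Cpos by simp
  have nti: "(norm (\<tau> i))\<^sup>2 \<le> C" using taubound[OF i_in] \<tau>_def by simp
  have inner_lb: "v \<bullet> \<tau> i \<ge> - (\<epsilon> * C)"
  proof -
    have trm: "c j * (\<tau> j \<bullet> \<tau> i) \<ge> c j * (- (\<epsilon> * C))" if j: "j \<in> {1..T}" for j
    proof (rule mult_left_mono[OF _ c_nonneg[OF j]])
      show "- (\<epsilon> * C) \<le> \<tau> j \<bullet> \<tau> i"
      proof (cases "j = i")
        case True
        then show ?thesis using eps_pos Cpos inner_ge_zero[of "\<tau> i"]
          by (smt (verit) mult_pos_pos)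
      next
        case False
        have "\<bar>\<tau> j \<bullet> \<tau> i\<bar> \<le> \<epsilon> * norm (\<tau> j) * norm (\<tau> i)"
          using incoh[OF j i_in False] \<tau>_def by simp
        also have "\<dots> \<le> \<epsilon> * sqrt C * sqrt C"
        proof -
          have "norm (\<tau> j) * norm (\<tau> i) \<le> sqrt C * sqrt C"
            using Cpos by (intro mult_mono[OF nt[OF j] nt[OF i_in]]) auto
          then show ?thesis using eps_pos
            by (metis mult.assoc mult_left_mono less_imp_le)
        qed
        finally show ?thesis using sC by (simp add: mult.assoc)
      qed
    qed
    have "v \<bullet> \<tau> i = (\<Sum>j=1..T. c j * (\<tau> j \<bullet> \<tau> i))"
      unfolding v_def by (simp add: inner_sum_left)
    also have "\<dots> \<ge> (\<Sum>j=1..T. c j * (- (\<epsilon> * C)))" by (rule sum_mono) (rule trm)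
    moreover have "(\<Sum>j=1..T. c j * (- (\<epsilon> * C))) = - (\<epsilon> * C)"
      using c_sum by (simp add: sum_negf sum_distrib_right[symmetric])
    ultimately show ?thesis by linarith
  qed
  have sqd: "(norm (v - \<tau> i))\<^sup>2 \<le> 2 * C * (1 + \<epsilon>)"
  proof -
    have "(norm (v - \<tau> i))\<^sup>2 = (norm v)\<^sup>2 - 2 * (v \<bullet> \<tau> i) + (norm (\<tau> i))\<^sup>2"
      by (simp add: power2_norm_eq_inner inner_diff_left inner_diff_right inner_commute)
    then show ?thesis using nvsq nti inner_lb by (simp add: algebra_simps)
  qed
  have "norm (v - \<tau> i) \<le> norm v + norm (\<tau> i)" by (rule norm_triangle_ineq4)
  also have "\<dots> \<le> 2 * sqrt C" using nv nt[OF i_in] by simp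
  finally have "norm (v - \<tau> i) \<le> r" using rbound by simp
  then have "\<bar>Loss i (theta_add theta0 theta T M W \<alpha>) - Loss i (theta i) - 0\<bar>
      \<le> Lsm i / 2 * (norm (v - \<tau> i))\<^sup>2"
    using smooth[OF i_in, of "theta_add theta0 theta T M W \<alpha>"] ta stationary[OF i_in] by simp
  also have "\<dots> \<le> Lsm i / 2 * (2 * C * (1 + \<epsilon>))"
    using sqd Lsm_nonneg[OF i_in] by (intro mult_left_mono) auto
  finally show ?thesis by simp
qed

end
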